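(* The following two statements are equivalent. (i) (Edmonds–Giles statement) For every digraph $D=(V,A)$ and every weight $w\in\{0,1\}^A$ such that $D$ has a dicut, if $\tau$ denotes the minimum weight $w(C)$ of a dicut $C$, then there exist $\tau$ dijoins $J_1,\dots,J_\tau$ of $D$ such that every arc $e$ lies in at most $w_e$ of them. (ii) For every undirected graph $G$ and every integer $\tau>0$, every $\tau$-SCO $x$ of $G$ can be decomposed into $\tau$ SCO's, i.e. there exist strongly connected orientations $O_1,\dots,O_\tau$ of $G$ with $x=\sum_{i=1}^\tau \chi_{O_i}$.
   Context: Graphs and digraphs are finite and loopless; parallel edges/arcs allowed. For a digraph, $\delta^+(U)$ / $\delta^-(U)$ denote arcs leaving/entering $U$; a dicut is $\delta^+_D(U)$ with $\emptyset\neq U\subsetneq V$ and $\delta^-_D(U)=\emptyset$; a dijoin is an arc set meeting every dicut. For an undirected graph $G=(V,E)$, $\vec G=(V,E^+\cup E^-)$ is the digraph obtained by replacing each edge $e=\{u,v\}$ by two arcs $e^+=(u,v)$ and $e^-=(v,u)$ (the choice of which is $e^+$ is arbitrary). An orientation of $G$ is a set $O\subseteq E^+\cup E^-$ containing exactly one of $e^+,e^-$ for each $e\in E$; it is a strongly connected orientation (SCO) if $\delta^+_{\vec G}(U)\cap O\neq\emptyset$ for all $\emptyset\neq U\subsetneq V$. $\chi_O$ is its characteristic vector. For an integer $\tau>0$, a $\tau$-SCO of $G$ is an integral vector $x\in\mathbb{Z}^{E^+\cup E^-}$ with $x_{e^+},x_{e^-}\ge0$ and $x_{e^+}+x_{e^-}=\tau$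 for all $e\in E$, and $x(\delta^+_{\vec G}(U))\ge\tau$ for all $\emptyset\neq U\subsetneq V$. *)

theory Defs
  imports Main
begin

definition digraph :: "nat set \<Rightarrow> nat set \<Rightarrow> (nat \<Rightarrow> nat) \<Rightarrow> (nat \<Rightarrow> nat) \<Rightarrow> bool" where
  "digraph V A tlf hdf \<longleftrightarrow> finite V \<and> finite A \<and>
     (\<forall>a\<in>A. tlf a \<in> V \<and> hdf a \<in> V \<and> tlf a \<noteq> hdf a)"

definition out_arcs :: "nat set \<Rightarrow> (nat \<Rightarrow> nat) \<Rightarrow> (nat \<Rightarrow> nat) \<Rightarrow> nat set \<Rightarrow> nat set" where
  "out_arcs A tlf hdf U = {a\<in>A. tlf a \<in> U \<and> hdf a \<notin> U}"

definition in_arcs :: "nat set \<Rightarrow> (nat \<Rightarrow> nat) \<Rightarrow> (nat \<Rightarrow> nat) \<Rightarrow> nat set \<Rightarrow> nat set" where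
  "in_arcs A tlf hdf U = {a\<in>A. hdf a \<in> U \<and> tlf a \<notin> U}"

definition is_dicut :: "nat set \<Rightarrow> nat set \<Rightarrow> (nat \<Rightarrow> nat) \<Rightarrow> (nat \<Rightarrow> nat) \<Rightarrow> nat set \<Rightarrow> bool" where
  "is_dicut V A tlf hdf C \<longleftrightarrow>
     (\<exists>U. U \<noteq> {} \<and> U \<subset> V \<and> in_arcs A tlf hdf U = {} \<and> C = out_arcs A tlf hdf U)"

definition is_dijoin :: "nat set \<Rightarrow> nat set \<Rightarrow> (nat \<Rightarrow> nat) \<Rightarrow> (nat \<Rightarrow> nat) \<Rightarrow> nat set \<Rightarrow> bool" where
  "is_dijoin V A tlf hdf J \<longleftrightarrow> J \<subseteq> A \<and> (\<forall>C. is_dicut V A tlf hdf C \<longrightarrow> J \<inter> C \<noteq> {})"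

definition edmonds_giles :: bool where
  "edmonds_giles \<longleftrightarrow>
    (\<forall>V A tlf hdf (w :: nat \<Rightarrow> nat).
       digraph V A tlf hdf \<longrightarrow> (\<forall>a\<in>A. w a \<in> {0, 1}) \<longrightarrow>
       (\<exists>C. is_dicut V A tlf hdf C) \<longrightarrow>
       (let \<tau> = Min {sum w C | C. is_dicut V A tlf hdf C} in
        \<exists>J :: nat \<Rightarrow> nat set.
          (\<forall>i<\<tau>. is_dijoin V A tlf hdf (J i)) \<and>
          (\<forall>a\<in>A. card {i. i < \<tau> \<and> a \<in> J i} \<le> w a)))"

text \<open>In the bidirected graph, the arc (e, True) is e+ = (u e, v e)
  and (e, False) is e- = (v e, u e).\<close>

definition ugraph :: "nat set \<Rightarrow> nat set \<Rightarrow> (nat \<Rightarrow> nat) \<Rightarrow> (nat \<Rightarrow> nat) \<Rightarrow> bool" where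
  "ugraph V E u v \<longleftrightarrow> finite V \<and> finite E \<and>
     (\<forall>e\<in>E. u e \<in> V \<and> v e \<in> V \<and> u e \<noteq> v e)"

definition bi_tail :: "(nat \<Rightarrow> nat) \<Rightarrow> (nat \<Rightarrow> nat) \<Rightarrow> nat \<times> bool \<Rightarrow> nat" where
  "bi_tail u v a = (if snd a then u (fst a) else v (fst a))"

definition bi_head :: "(nat \<Rightarrow> nat) \<Rightarrow> (nat \<Rightarrow> nat) \<Rightarrow> nat \<times> bool \<Rightarrow> nat" where
  "bi_head u v a = (if snd a then v (fst a) else u (fst a))"

definition bi_out :: "nat set \<Rightarrow> (nat \<Rightarrow> nat) \<Rightarrow> (nat \<Rightarrow> nat) \<Rightarrow> nat set \<Rightarrow> (nat \<times> bool) set" where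
  "bi_out E u v U = {a \<in> E \<times> UNIV. bi_tail u v a \<in> U \<and> bi_head u v a \<notin> U}"

definition orientation :: "nat set \<Rightarrow> (nat \<times> bool) set \<Rightarrow> bool" where
  "orientation E Ori \<longleftrightarrow> Ori \<subseteq> E \<times> UNIV \<and>
     (\<forall>e\<in>E. ((e, True) \<in> Ori) \<noteq> ((e, False) \<in> Ori))"

definition is_SCO :: "nat set \<Rightarrow> nat set \<Rightarrow> (nat \<Rightarrow> nat) \<Rightarrow> (nat \<Rightarrow> nat) \<Rightarrow> (nat \<times> bool) set \<Rightarrow> bool" where
  "is_SCO V E u v Ori \<longleftrightarrow> orientation E Ori \<and>
     (\<forall>U. U \<noteq> {} \<and> U \<subset> V \<longrightarrow> bi_out E u v U \<inter> Ori \<noteq> {})"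

definition is_tau_SCO :: "nat set \<Rightarrow> nat set \<Rightarrow> (nat \<Rightarrow> nat) \<Rightarrow> (nat \<Rightarrow> nat) \<Rightarrow> nat \<Rightarrow> (nat \<times> bool \<Rightarrow> int) \<Rightarrow> bool" where
  "is_tau_SCO V E u v \<tau> x \<longleftrightarrow>
     (\<forall>e\<in>E. x (e, True) \<ge> 0 \<and> x (e, False) \<ge> 0 \<and> x (e, True) + x (e, False) = int \<tau>) \<and>
     (\<forall>U. U \<noteq> {} \<and> U \<subset> V \<longrightarrow> sum x (bi_out E u v U) \<ge> int \<tau>)"

definition sco_decomposition :: bool where
  "sco_decomposition \<longleftrightarrow>
    (\<forall>V E u v (\<tau>::nat) x.
       ugraph V E u v \<longrightarrow> 0 < \<tau> \<longrightarrow> is_tau_SCO V E u v \<tau> x \<longrightarrow>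
       (\<exists>Ori :: nat \<Rightarrow> (nat \<times> bool) set.
          (\<forall>i<\<tau>. is_SCO V E u v (Ori i)) \<and>
          (\<forall>a \<in> E \<times> UNIV. x a = (\<Sum>i<\<tau>. if a \<in> Ori i then 1 else 0))))"

end

theory Submission imports Defs "HOL-Library.Nat_Bijection" begin


lemma sum_ind_card: "(\<Sum>i<(n::nat). if P i then 1 else 0::int) = int (card {i. i < n \<and> P i})"
proof (induction n)
  case 0 then show ?case by simp
next
  case (Suc n)
  have "{i. i < Suc n \<and> P i} = {i. i < n \<and> P i} \<union> (if P n then {n} else {})" by (auto simp: less_Suc_eq)
  then show ?case using Suc by (auto simp: card_insert_if)
qed

definition cd :: "(nat \<times> bool) \<times> nat \<Rightarrow> nat" where
  "cd p = prod_encode (prod_encode (fst (fst p), if snd (fst p) then 1 else 0), snd p)"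
definition dc :: "nat \<Rightarrow> (nat \<times> bool) \<times> nat" where
  "dc n = ((fst (prod_decode (fst (prod_decode n))), snd (prod_decode (fst (prod_decode n))) = 1), snd (prod_decode n))"

lemma dc_cd[simp]: "dc (cd p) = p"
  by (cases p) (auto simp: cd_def dc_def)

lemma cd_inj[simp]: "cd p = cd q \<longleftrightarrow> p = q"
  by (metis dc_cd)

lemma bi_head_cases: "bi_head u v (e, b) = u e \<or> bi_head u v (e, b) = v e"
  by (auto simp: bi_head_def)
lemma bi_tail_head: "bi_tail u v (e, b) = bi_head u v (e, \<not> b)"
  by (auto simp: bi_head_def bi_tail_def)
lemma bi_ends: "{bi_tail u v (e, b), bi_head u v (e, b)} = {u e, v e}"
  by (auto simp: bi_head_def bi_tail_def)

lemma par_simp[simp]: "2*(y::nat) \<noteq> Suc (2*x)" "Suc (2*x) \<noteq> 2*(y::nat)" by presburger+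

lemma dir2: "edmonds_giles \<Longrightarrow> sco_decomposition"
  unfolding sco_decomposition_def
proof (intro allI impI)
  fix V E u v and \<tau> :: nat and x
  assume eg: edmonds_giles and ug: "ugraph V E u v" and tp: "0 < \<tau>" and ts: "is_tau_SCO V E u v \<tau> x"
  have finV: "finite V" and finE: "finite E" and ends: "\<And>e. e \<in> E \<Longrightarrow> u e \<in> V \<and> v e \<in> V \<and> u e \<noteq> v e"
    using ug by (auto simp: ugraph_def)
  have xnn: "\<And>e b. e \<in> E \<Longrightarrow> x (e, b) \<ge> 0" and xs: "\<And>e. e \<in> E \<Longrightarrow> x (e, True) + x (e, False) = int \<tau>"
    using ts unfolding is_tau_SCO_def by (metis (full_types))+
  have cut: "\<And>U. U \<noteq> {} \<Longrightarrow> U \<subset> V \<Longrightarrow> int \<tau> \<le> sum x (bi_out E u v U)"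
    using ts unfolding is_tau_SCO_def by blast
  show "\<exists>Ori. (\<forall>i<\<tau>. is_SCO V E u v (Ori i)) \<and>
           (\<forall>a\<in>E \<times> UNIV. x a = (\<Sum>i<\<tau>. if a \<in> Ori i then 1 else 0))"
  proof (cases "E = {}")
    case True
    show ?thesis
    proof (intro exI conjI allI impI ballI)
      fix i assume "i < \<tau>"
      show "is_SCO V E u v {}" unfolding is_SCO_def orientation_def
      proof (intro conjI allI impI)
        fix U assume "U \<noteq> {} \<and> U \<subset> V"
        then have "int \<tau> \<le> sum x (bi_out E u v U)" using cut by blast
        moreover have "bi_out E u v U = {}" using True by (auto simp: bi_out_def)
        ultimately show "bi_out E u v U \<inter> {} \<noteq> {}" using tp by simp
      qed (use True in auto)
    next
      fix a assume "a \<in> E \<times> (UNIV :: bool set)" then show "x a = (\<Sum>i<\<tau>. if a \<in> {} then 1 else 0)"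
        using True by auto
    qed
  next
    case False
    then obtain e0 where e0: "e0 \<in> E" by auto
    define Sig where "Sig = Sigma (E \<times> UNIV) (\<lambda>a. {..nat (x a)})"
    define V' where "V' = (\<lambda>y. 2*y) ` V \<union> (\<lambda>e. 2*e+1) ` E"
    define A' where "A' = cd ` Sig"
    define tl' where "tl' = (\<lambda>n. 2 * fst (fst (dc n)) + 1)"
    define hd' where "hd' = (\<lambda>n. 2 * bi_head u v (fst (dc n)))"
    define w' where "w' = (\<lambda>n. if snd (dc n) < nat (x (fst (dc n))) then 1 else (0::nat))"
    have finSig: "finite Sig" unfolding Sig_def using finE by auto
    have finA': "finite A'" unfolding A'_def using finSig by auto
    have tlcd[simp]: "tl' (cd ((e, b), j)) = 2*e+1" for e b j by (simp add: tl'_def)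
    have hdcd[simp]: "hd' (cd ((e, b), j)) = 2 * bi_head u v (e, b)" for e b j by (simp add: hd'_def)
    have wcd[simp]: "w' (cd ((e, b), j)) = (if j < nat (x (e, b)) then 1 else 0)" for e b j by (simp add: w'_def)
    have memA': "cd ((e, b), j) \<in> A' \<longleftrightarrow> e \<in> E \<and> j \<le> nat (x (e, b))" for e b j
      unfolding A'_def Sig_def by auto
    have A'E: "n \<in> A' \<Longrightarrow> \<exists>e b j. n = cd ((e, b), j) \<and> e \<in> E \<and> j \<le> nat (x (e, b))" for n
      unfolding A'_def Sig_def by auto
    have bhV: "e \<in> E \<Longrightarrow> bi_head u v (e, b) \<in> V" for e b using ends bi_head_cases by metis
    have par: "2*a+1 \<noteq> 2*(c::nat)" for a c by presburger
    have dg: "digraph V' A' tl' hd'"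
      unfolding digraph_def
    proof (intro conjI ballI)
      show "finite V'" using finV finE by (simp add: V'_def)
      show "finite A'" by (rule finA')
      fix n assume "n \<in> A'"
      then obtain e b j where n: "n = cd ((e, b), j)" "e \<in> E" by (auto dest: A'E)
      show "tl' n \<in> V'" using n by (simp add: V'_def)
      show "hd' n \<in> V'" using n bhV by (simp add: V'_def)
      show "tl' n \<noteq> hd' n" using n par by simp
    qed
    have w01: "\<forall>a\<in>A'. w' a \<in> {0, 1}" by (simp add: w'_def)
    (* closure under zero arcs *)
    have F2: "2*e+1 \<in> U" if "in_arcs A' tl' hd' U = {}" "e \<in> E" "2 * bi_head u v (e, b) \<in> U" for U e b
    proof (rule ccontr)
      assume "2*e+1 \<notin> U"
      then have "cd ((e, b), nat (x (e, b))) \<in> in_arcs A' tl' hd' U"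
        using that by (simp add: in_arcs_def memA')
      then show False using that by auto
    qed
    have F3: "(\<Sum>a\<in>T. nat (x a)) \<le> sum w' (out_arcs A' tl' hd' U)"
      if "T \<subseteq> E \<times> UNIV" "\<And>e b. (e, b) \<in> T \<Longrightarrow> 2*e+1 \<in> U \<and> 2 * bi_head u v (e, b) \<notin> U" for T U
    proof -
      have finT: "finite T" using that(1) finE by (auto intro: finite_subset)
      have "(\<Sum>a\<in>T. nat (x a)) = (\<Sum>a\<in>T. \<Sum>j\<in>{..<nat (x a)}. w' (cd (a, j)))"
        by (intro sum.cong refl) (auto simp: split: prod.splits)
      also have "\<dots> = sum (w' \<circ> cd) (Sigma T (\<lambda>a. {..<nat (x a)}))"
        by (subst sum.Sigma) (auto simp: finT)
      also have "\<dots> = sum w' (cd ` Sigma T (\<lambda>a. {..<nat (x a)}))"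
        by (subst sum.reindex) (auto simp: inj_on_def)
      also have "\<dots> \<le> sum w' (out_arcs A' tl' hd' U)"
      proof (rule sum_mono2)
        show "finite (out_arcs A' tl' hd' U)" using finA' by (auto simp: out_arcs_def)
        show "cd ` Sigma T (\<lambda>a. {..<nat (x a)}) \<subseteq> out_arcs A' tl' hd' U"
        proof
          fix n assume "n \<in> cd ` Sigma T (\<lambda>a. {..<nat (x a)})"
          then obtain e b j where n: "n = cd ((e, b), j)" "(e, b) \<in> T" "j < nat (x (e, b))" by auto
          then show "n \<in> out_arcs A' tl' hd' U" using that n by (auto simp: out_arcs_def memA')
        qed
      qed simp
      finally show ?thesis .
    qed
    have intsum: "int (\<Sum>a\<in>T. nat (x a)) = sum x T" if "T \<subseteq> E \<times> UNIV" for T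
      unfolding of_nat_sum using that xnn by (intro sum.cong) auto
    have lb: "\<tau> \<le> sum w' C" if dC: "is_dicut V' A' tl' hd' C" for C
    proof -
      obtain U where U: "U \<noteq> {}" "U \<subset> V'" "in_arcs A' tl' hd' U = {}" "C = out_arcs A' tl' hd' U"
        using dC by (auto simp: is_dicut_def)
      define S where "S = {y\<in>V. 2*y \<in> U}"
      consider "S = {}" | "S = V" | "S \<noteq> {}" "S \<subset> V" using S_def by blast
      then show ?thesis
      proof cases
        case 1
        obtain z where z: "z \<in> U" using U by auto
        then have "z \<in> V'" using U(2) by auto
        then consider y where "z = 2*y" "y \<in> V" | e where "z = 2*e+1" "e \<in> E" by (auto simp: V'_def)
        then obtain e where e: "e \<in> E" "2*e+1 \<in> U"
        proof cases
          case 1 then show ?thesis using z \<open>S = {}\<close> by (auto simp: S_def)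
        next
          case 2 then show ?thesis using z that by blast
        qed
        let ?T = "{(e, True), (e, False)}"
        have "(\<Sum>a\<in>?T. nat (x a)) \<le> sum w' C"
          unfolding U(4)
        proof (rule F3)
          show "?T \<subseteq> E \<times> UNIV" using e by auto
          fix e' b assume "(e', b) \<in> ?T"
          then show "2*e'+1 \<in> U \<and> 2 * bi_head u v (e', b) \<notin> U"
            using e 1 bhV[OF e(1)] by (auto simp: S_def)
        qed
        moreover have "(\<Sum>a\<in>?T. nat (x a)) = \<tau>" using xs[OF e(1)] xnn[OF e(1), of True] xnn[OF e(1), of False] by simp
        ultimately show ?thesis by simp
      next
        case 2
        have "V' \<subseteq> U"
        proof
          fix z assume "z \<in> V'"
          then consider y where "z = 2*y" "y \<in> V" | e where "z = 2*e+1" "e \<in> E" by (auto simp: V'_def)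
          then show "z \<in> U"
          proof cases
            case 1 then show ?thesis using 2 by (auto simp: S_def)
          next
            case (2 e)
            have "bi_head u v (e, False) = u e" by (simp add: bi_head_def)
            then have "2 * bi_head u v (e, False) \<in> U" using ends[OF 2(2)] \<open>S = V\<close> by (auto simp: S_def)
            then show ?thesis using F2[OF U(3) 2(2)] 2 by simp
          qed
        qed
        then show ?thesis using U by auto
      next
        case 3
        let ?T = "bi_out E u v S"
        have TE: "?T \<subseteq> E \<times> UNIV" by (auto simp: bi_out_def)
        have "(\<Sum>a\<in>?T. nat (x a)) \<le> sum w' C"
          unfolding U(4)
        proof (rule F3[OF TE])
          fix e b assume eb: "(e, b) \<in> ?T"
          then have e: "e \<in> E" "bi_tail u v (e, b) \<in> S" "bi_head u v (e, b) \<notin> S" by (auto simp: bi_out_def)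
          have "2 * bi_head u v (e, \<not> b) \<in> U" using e(2) by (simp add: S_def bi_tail_head)
          then have "2*e+1 \<in> U" using F2[OF U(3) e(1)] by blast
          moreover have "2 * bi_head u v (e, b) \<notin> U" using e(3) bhV[OF e(1)] by (simp add: S_def)
          ultimately show "2*e+1 \<in> U \<and> 2 * bi_head u v (e, b) \<notin> U" by simp
        qed
        moreover have "\<tau> \<le> (\<Sum>a\<in>?T. nat (x a))" using cut[OF 3] intsum[OF TE] by (metis of_nat_le_iff)
        ultimately show ?thesis by simp
      qed
    qed
    have dicut_e: "is_dicut V' A' tl' hd' (out_arcs A' tl' hd' {2*e+1})" if "e \<in> E" for e
      unfolding is_dicut_def
    proof (intro exI conjI)
      show "{2*e+1} \<noteq> {}" by simp
      have "2 * u e \<in> V'" "2*e+1 \<in> V'" using that ends by (auto simp: V'_def)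
      moreover have "2 * u e \<noteq> 2*e+1" using par by metis
      ultimately show "{2*e+1} \<subset> V'" by auto
      show "in_arcs A' tl' hd' {2*e+1} = {}"
        by (auto simp: in_arcs_def hd'_def)
    qed simp
    define \<tau>' where "\<tau>' = Min {sum w' C |C. is_dicut V' A' tl' hd' C}"
    have "{C. is_dicut V' A' tl' hd' C} \<subseteq> Pow A'" by (auto simp: is_dicut_def out_arcs_def)
    then have "finite {C. is_dicut V' A' tl' hd' C}" using finA' by (meson finite_Pow_iff finite_subset)
    moreover have "{sum w' C |C. is_dicut V' A' tl' hd' C} = sum w' ` {C. is_dicut V' A' tl' hd' C}" by blast
    ultimately have fin: "finite {sum w' C |C. is_dicut V' A' tl' hd' C}" by simp
    have tt: "\<tau> \<le> \<tau>'" unfolding \<tau>'_def using fin dicut_e[OF e0] lb by (subst Min_ge_iff) auto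
    have "\<exists>C. is_dicut V' A' tl' hd' C" using dicut_e[OF e0] by blast
    then obtain J where Jd: "\<forall>i<\<tau>'. is_dijoin V' A' tl' hd' (J i)"
      and Jc: "\<forall>a\<in>A'. card {i. i < \<tau>' \<and> a \<in> J i} \<le> w' a"
      using eg dg w01 unfolding edmonds_giles_def Let_def \<tau>'_def by blast
    have Jc': "card {i. i < \<tau> \<and> a \<in> J i} \<le> w' a" if "a \<in> A'" for a
    proof -
      have "card {i. i < \<tau> \<and> a \<in> J i} \<le> card {i. i < \<tau>' \<and> a \<in> J i}"
        using tt by (intro card_mono) auto
      then show ?thesis using Jc that by fastforce
    qed
    have notJ: "cd ((e, b), nat (x (e, b))) \<notin> J i" if "e \<in> E" "i < \<tau>" for e b i
    proof
      assume a: "cd ((e, b), nat (x (e, b))) \<in> J i"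
      have "card {i. i < \<tau> \<and> cd ((e, b), nat (x (e, b))) \<in> J i} = 0"
        using Jc'[of "cd ((e, b), nat (x (e, b)))"] that by (simp add: memA')
      then show False using a that by simp
    qed
    have Jsub: "J i \<subseteq> A'" if "i < \<tau>" for i using Jd that tt by (auto simp: is_dijoin_def)
    have hit: "J i \<inter> out_arcs A' tl' hd' U \<noteq> {}" if "i < \<tau>" "is_dicut V' A' tl' hd' (out_arcs A' tl' hd' U)" for i U
      using Jd that tt unfolding is_dijoin_def by auto
    define Ori where "Ori = (\<lambda>i. {(e, b). e \<in> E \<and> (\<exists>j < nat (x (e, b)). cd ((e, b), j) \<in> J i)})"
    have one: "(e, True) \<in> Ori i \<or> (e, False) \<in> Ori i" if ie: "i < \<tau>" "e \<in> E" for i e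
    proof -
      obtain n where n: "n \<in> J i" "n \<in> out_arcs A' tl' hd' {2*e+1}" using hit[OF ie(1) dicut_e[OF ie(2)]] by auto
      then obtain e' b j where n': "n = cd ((e', b), j)" "e' \<in> E" "j \<le> nat (x (e', b))"
        using A'E[of n] n(2) unfolding out_arcs_def by blast
      have "e' = e" using n n' by (auto simp: out_arcs_def)
      moreover have "j \<noteq> nat (x (e', b))" using notJ[OF n'(2) ie(1)] n n' by auto
      ultimately have "j < nat (x (e, b))" "cd ((e, b), j) \<in> J i" using n n' by auto
      then have "(e, b) \<in> Ori i" using ie by (auto simp: Ori_def)
      then show ?thesis by (cases b) auto
    qed
    have le: "card {i. i < \<tau> \<and> (e, b) \<in> Ori i} \<le> nat (x (e, b))" if "e \<in> E" for e b
    proof -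
      have "{i. i < \<tau> \<and> (e, b) \<in> Ori i} \<subseteq> (\<Union>j\<in>{..<nat (x (e, b))}. {i. i < \<tau> \<and> cd ((e, b), j) \<in> J i})"
        by (auto simp: Ori_def)
      then have "card {i. i < \<tau> \<and> (e, b) \<in> Ori i} \<le> card (\<Union>j\<in>{..<nat (x (e, b))}. {i. i < \<tau> \<and> cd ((e, b), j) \<in> J i})"
        by (intro card_mono) auto
      also have "\<dots> \<le> (\<Sum>j\<in>{..<nat (x (e, b))}. card {i. i < \<tau> \<and> cd ((e, b), j) \<in> J i})"
        by (rule card_UN_le) simp
      also have "\<dots> \<le> (\<Sum>j\<in>{..<nat (x (e, b))}. 1)"
      proof (rule sum_mono)
        fix j assume "j \<in> {..<nat (x (e, b))}"
        then show "card {i. i < \<tau> \<and> cd ((e, b), j) \<in> J i} \<le> 1"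
          using Jc'[of "cd ((e, b), j)"] that by (simp add: memA')
      qed
      finally show ?thesis by simp
    qed
    have exact: "card {i. i < \<tau> \<and> (e, b) \<in> Ori i} = nat (x (e, b))
        \<and> {i. i < \<tau> \<and> (e, True) \<in> Ori i} \<inter> {i. i < \<tau> \<and> (e, False) \<in> Ori i} = {}" if e: "e \<in> E" for e b
    proof -
      define P where "P = {i. i < \<tau> \<and> (e, True) \<in> Ori i}"
      define Q where "Q = {i. i < \<tau> \<and> (e, False) \<in> Ori i}"
      have PQ: "P \<union> Q = {..<\<tau>}" using one[OF _ e] by (auto simp: P_def Q_def)
      have "card P + card Q = card (P \<union> Q) + card (P \<inter> Q)"
        by (rule card_Un_Int) (auto simp: P_def Q_def)
      then have c: "card P + card Q = \<tau> + card (P \<inter> Q)" using PQ by simp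
      have "nat (x (e, True)) + nat (x (e, False)) = \<tau>" using xs[OF e] xnn[OF e, of True] xnn[OF e, of False] by simp
      moreover have "card P \<le> nat (x (e, True))" "card Q \<le> nat (x (e, False))"
        using le[OF e] by (auto simp: P_def Q_def)
      ultimately have "card (P \<inter> Q) = 0" "card P = nat (x (e, True))" "card Q = nat (x (e, False))"
        using c by linarith+
      moreover have "finite (P \<inter> Q)" by (auto simp: P_def)
      ultimately show ?thesis unfolding P_def Q_def by (cases b) auto
    qed
    show ?thesis
    proof (intro exI conjI allI impI ballI)
      fix i assume i: "i < \<tau>"
      show "is_SCO V E u v (Ori i)" unfolding is_SCO_def orientation_def
      proof (intro conjI ballI allI impI)
        show "Ori i \<subseteq> E \<times> UNIV" by (auto simp: Ori_def)
      next
        fix e assume e: "e \<in> E"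
        have "i \<notin> {i. i < \<tau> \<and> (e, True) \<in> Ori i} \<inter> {i. i < \<tau> \<and> (e, False) \<in> Ori i}"
          using exact[OF e] by auto
        then show "((e, True) \<in> Ori i) \<noteq> ((e, False) \<in> Ori i)" using one[OF i e] i by auto
      next
        fix U assume U: "U \<noteq> {} \<and> U \<subset> V"
        define U' where "U' = (\<lambda>y. 2*y) ` U \<union> (\<lambda>e. 2*e+1) ` {e\<in>E. u e \<in> U \<or> v e \<in> U}"
        have dcU: "is_dicut V' A' tl' hd' (out_arcs A' tl' hd' U')"
          unfolding is_dicut_def
        proof (intro exI conjI)
          show "U' \<noteq> {}" using U by (auto simp: U'_def)
          obtain y where y: "y \<in> V" "y \<notin> U" using U by auto
          have "2*y \<notin> U'" using y par by (auto simp: U'_def)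
          moreover have "U' \<subseteq> V'" using U by (auto simp: U'_def V'_def)
          moreover have "2*y \<in> V'" using y by (auto simp: V'_def)
          ultimately show "U' \<subset> V'" by blast
          show "in_arcs A' tl' hd' U' = {}"
          proof (rule ccontr)
            assume "in_arcs A' tl' hd' U' \<noteq> {}"
            then obtain n where n: "n \<in> A'" "hd' n \<in> U'" "tl' n \<notin> U'" by (auto simp: in_arcs_def)
            then obtain e b j where n': "n = cd ((e, b), j)" "e \<in> E" using A'E by blast
            have "2 * bi_head u v (e, b) \<in> U'" using n n' by simp
            then have "bi_head u v (e, b) \<in> U" using par by (auto simp: U'_def)
            then have "u e \<in> U \<or> v e \<in> U" using bi_head_cases by metis
            then have "2*e+1 \<in> U'" using n'(2) by (auto simp: U'_def)
            then show False using n n' by simp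
          qed
        qed simp
        obtain n where n: "n \<in> J i" "n \<in> out_arcs A' tl' hd' U'" using hit[OF i dcU] by auto
        then obtain e b j where n': "n = cd ((e, b), j)" "e \<in> E" "j \<le> nat (x (e, b))"
          using A'E[of n] n(2) unfolding out_arcs_def by blast
        have "j \<noteq> nat (x (e, b))" using notJ[OF n'(2) i] n n' by auto
        then have "j < nat (x (e, b))" "cd ((e, b), j) \<in> J i" using n n' by auto
        then have inO: "(e, b) \<in> Ori i" using n'(2) by (auto simp: Ori_def)
        have t: "2*e+1 \<in> U'" and h: "2 * bi_head u v (e, b) \<notin> U'" using n n' by (auto simp: out_arcs_def)
        from t have "u e \<in> U \<or> v e \<in> U" using par by (auto simp: U'_def)
        moreover have "bi_head u v (e, b) \<notin> U" using h by (auto simp: U'_def)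
        ultimately have "bi_tail u v (e, b) \<in> U" by (cases b) (auto simp: bi_tail_def bi_head_def)
        then have "(e, b) \<in> bi_out E u v U" using n'(2) \<open>bi_head u v (e, b) \<notin> U\<close> by (auto simp: bi_out_def)
        then show "bi_out E u v U \<inter> Ori i \<noteq> {}" using inO by auto
      qed
    next
      fix a assume a: "a \<in> E \<times> (UNIV :: bool set)"
      obtain e b where ab: "a = (e, b)" by (cases a)
      have e: "e \<in> E" using a ab by auto
      show "x a = (\<Sum>i<\<tau>. if a \<in> Ori i then 1 else 0)"
        unfolding sum_ind_card ab using exact[OF e, of b] xnn[OF e, of b] by simp
    qed
  qed
qed


lemma dir1: "sco_decomposition \<Longrightarrow> edmonds_giles"
  unfolding edmonds_giles_def Let_def
proof (intro allI impI)
  fix V A tlf hdf and w :: "nat \<Rightarrow> nat"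
  assume sco: sco_decomposition and dg: "digraph V A tlf hdf" and w01: "\<forall>a\<in>A. w a \<in> {0,1}"
    and ex: "\<exists>C. is_dicut V A tlf hdf C"
  define \<tau> where "\<tau> = Min {sum w C |C. is_dicut V A tlf hdf C}"
  have "{C. is_dicut V A tlf hdf C} \<subseteq> Pow A" by (auto simp: is_dicut_def out_arcs_def)
  then have "finite {C. is_dicut V A tlf hdf C}" using dg unfolding digraph_def
    by (meson finite_Pow_iff finite_subset)
  moreover have "{sum w C |C. is_dicut V A tlf hdf C} = sum w ` {C. is_dicut V A tlf hdf C}" by blast
  ultimately have fin: "finite {sum w C |C. is_dicut V A tlf hdf C}" by simp
  have minle: "\<tau> \<le> sum w C" if "is_dicut V A tlf hdf C" for C
    unfolding \<tau>_def using fin that by (intro Min_le) auto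
  show "\<exists>J. (\<forall>i<\<tau>. is_dijoin V A tlf hdf (J i)) \<and> (\<forall>a\<in>A. card {i. i < \<tau> \<and> a \<in> J i} \<le> w a)"
  proof (cases "\<tau> = 0")
    case True then show ?thesis by auto
  next
    case False
    have finV: "finite V" and finA: "finite A" and ends: "\<And>a. a \<in> A \<Longrightarrow> tlf a \<in> V \<and> hdf a \<in> V \<and> tlf a \<noteq> hdf a"
      using dg by (auto simp: digraph_def)
    define E where "E = (\<lambda>a. 2*a) ` A \<union> (\<lambda>a. 2*a+1) ` {a\<in>A. w a = 1}"
    define u where "u = (\<lambda>n::nat. tlf (n div 2))"
    define v where "v = (\<lambda>n::nat. hdf (n div 2))"
    define x where "x = (\<lambda>(n::nat, b::bool). if even n then (if b then int \<tau> else 0) else (if b then int \<tau> - 1 else 1))"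
    have finE: "finite E" unfolding E_def using finA by auto
    have xnn: "x a \<ge> 0" for a using False by (auto simp: x_def split: prod.splits)
    have ug: "ugraph V E u v" unfolding ugraph_def using finV finE ends by (auto simp: E_def u_def v_def)
    have finbo: "finite (bi_out E u v U)" for U
      by (rule finite_subset[of _ "E \<times> UNIV"]) (auto simp: bi_out_def finE)
    have tsco: "is_tau_SCO V E u v \<tau> x"
      unfolding is_tau_SCO_def
    proof (intro conjI ballI allI impI)
      fix e assume "e \<in> E"
      show "x (e, True) \<ge> 0" "x (e, False) \<ge> 0" by (rule xnn)+
      show "x (e, True) + x (e, False) = int \<tau>" by (auto simp: x_def)
    next
      fix U assume U: "U \<noteq> {} \<and> U \<subset> V"
      show "int \<tau> \<le> sum x (bi_out E u v U)"
      proof (cases "out_arcs A tlf hdf U = {}")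
        case False
        then obtain a where a: "a \<in> A" "tlf a \<in> U" "hdf a \<notin> U" by (auto simp: out_arcs_def)
        have mem: "(2*a, True) \<in> bi_out E u v U"
          using a by (auto simp: bi_out_def E_def u_def v_def bi_tail_def bi_head_def)
        have "x (2*a, True) \<le> sum x (bi_out E u v U)"
          by (rule member_le_sum[OF mem]) (auto simp: xnn finbo)
        then show ?thesis by (simp add: x_def)
      next
        case True
        define C where "C = out_arcs A tlf hdf (V - U)"
        have dc: "is_dicut V A tlf hdf C"
          unfolding is_dicut_def C_def
        proof (intro exI conjI)
          show "V - U \<noteq> {}" "V - U \<subset> V" using U by auto
          show "in_arcs A tlf hdf (V - U) = {}"
            using True ends by (auto simp: in_arcs_def out_arcs_def)
        qed simp
        have CA: "C \<subseteq> A" by (auto simp: C_def out_arcs_def)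
        have wC: "\<And>a. a \<in> C \<Longrightarrow> w a = 0 \<or> w a = 1" using CA w01 by auto
        have "sum w C = sum w {a\<in>C. w a = 1}"
          apply (rule sum.mono_neutral_right)
          using CA finA apply (auto intro: finite_subset)[2]
          using wC by fastforce
        then have "int (sum w C) = (\<Sum>a\<in>{a\<in>C. w a = 1}. x (2*a+1, False))"
          by (simp add: x_def)
        also have "\<dots> = sum x ((\<lambda>a. (2*a+1, False)) ` {a\<in>C. w a = 1})"
          by (subst sum.reindex) (auto simp: inj_on_def)
        also have "\<dots> \<le> sum x (bi_out E u v U)"
        proof (rule sum_mono2[OF finbo])
          show "(\<lambda>a. (2 * a + 1, False)) ` {a \<in> C. w a = 1} \<subseteq> bi_out E u v U"
            using ends by (auto simp: C_def out_arcs_def bi_out_def E_def u_def v_def bi_tail_def bi_head_def)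
        qed (auto simp: xnn)
        finally show ?thesis using minle[OF dc] by linarith
      qed
    qed
    obtain Ori where scoi: "\<forall>i<\<tau>. is_SCO V E u v (Ori i)"
      and dec: "\<forall>a \<in> E \<times> UNIV. x a = (\<Sum>i<\<tau>. if a \<in> Ori i then 1 else 0)"
      using sco ug tsco False unfolding sco_decomposition_def by blast
    have cnt: "int (card {i. i < \<tau> \<and> a \<in> Ori i}) = x a" if "a \<in> E \<times> UNIV" for a
      using dec[rule_format, OF that] by (simp add: sum_ind_card)
    define J where "J = (\<lambda>i. {a\<in>A. w a = 1 \<and> (2*a+1, False) \<in> Ori i})"
    show ?thesis
    proof (intro exI conjI allI impI ballI)
      fix a assume a: "a \<in> A"
      show "card {i. i < \<tau> \<and> a \<in> J i} \<le> w a"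
      proof (cases "w a = 1")
        case True
        then have "2*a+1 \<in> E" using a by (auto simp: E_def)
        then have "int (card {i. i < \<tau> \<and> (2*a+1, False) \<in> Ori i}) = 1"
          using cnt[of "(2*a+1, False)"] by (simp add: x_def)
        moreover have "{i. i < \<tau> \<and> a \<in> J i} = {i. i < \<tau> \<and> (2*a+1, False) \<in> Ori i}"
          using a True by (auto simp: J_def)
        ultimately show ?thesis using True by simp
      next
        case False
        then have "{i. i < \<tau> \<and> a \<in> J i} = {}" by (auto simp: J_def)
        then show ?thesis by (simp only: card.empty)
      qed
    next
      fix i assume i: "i < \<tau>"
      show "is_dijoin V A tlf hdf (J i)"
        unfolding is_dijoin_def
      proof (intro conjI allI impI)
        show "J i \<subseteq> A" by (auto simp: J_def)
      next
        fix C assume "is_dicut V A tlf hdf C"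
        then obtain U where U: "U \<noteq> {}" "U \<subset> V" "in_arcs A tlf hdf U = {}" "C = out_arcs A tlf hdf U"
          by (auto simp: is_dicut_def)
        have "V - U \<noteq> {}" "V - U \<subset> V" using U by auto
        then have "bi_out E u v (V - U) \<inter> Ori i \<noteq> {}"
          using scoi i by (auto simp: is_SCO_def)
        then obtain e b where eb: "(e, b) \<in> bi_out E u v (V - U)" "(e, b) \<in> Ori i" by auto
        then have eE: "e \<in> E" and tl: "bi_tail u v (e,b) \<in> V - U" and hd: "bi_head u v (e,b) \<notin> V - U"
          by (auto simp: bi_out_def)
        obtain a where aA: "a \<in> A" and ea: "e = 2*a \<or> (e = 2*a+1 \<and> w a = 1)"
          using eE by (auto simp: E_def)
        have ed: "e div 2 = a" using ea by auto
        have b: "\<not> b"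
        proof
          assume b
          then have "hdf a \<in> U" "tlf a \<notin> U" using tl hd ends[OF aA] ed
            by (auto simp: bi_tail_def bi_head_def u_def v_def)
          then have "a \<in> in_arcs A tlf hdf U" using aA by (auto simp: in_arcs_def)
          then show False using U by auto
        qed
        have aC: "a \<in> C" using tl hd ends[OF aA] ed b aA U(4)
          by (auto simp: bi_tail_def bi_head_def u_def v_def out_arcs_def)
        have "e \<noteq> 2*a"
        proof
          assume e2: "e = 2*a"
          have "int (card {i. i < \<tau> \<and> (e, False) \<in> Ori i}) = 0"
            using cnt[of "(e, False)"] eE e2 by (simp add: x_def)
          then have "{i. i < \<tau> \<and> (e, False) \<in> Ori i} = {}" by simp
          then show False using i eb b by auto
        qed
        then have "e = 2*a+1" "w a = 1" using ea by auto
        then have "a \<in> J i" using aA eb b by (auto simp: J_def)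
        then show "J i \<inter> C \<noteq> {}" using aC by auto
      qed
    qed
  qed
qed


theorem theorem6:
  shows "edmonds_giles \<longleftrightarrow> sco_decomposition"
  using dir1 dir2 by blast

end
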